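(* A class $\mathcal{C}$ of digraphs without parallel edges has bounded directed branch-width if and only if the class $\{\vec{L}(D): D\in\mathcal{C}\}$ of their directed line graphs has bounded bi-cut-rank-width. More precisely, for every digraph $D$ without parallel edges, \[\frac{\operatorname{bcrk}(\vec{L}(D))}{2} - 1 \;\le\; \operatorname{dbw}(D) \;\le\; 8\bigl(1 + 2^{\operatorname{bcrk}(\vec{L}(D))}\bigr).\]
   Context: All digraphs are finite and loopless; $\vec{xy}$ denotes a directed edge from $x$ to $y$. A layout of a symmetric function $f:2^U\to\mathbb{Z}$ (symmetric means $f(X)=f(U\setminus X)$) on a finite set $U$ is a pair $(T,\beta)$ with $T$ a tree of maximum degree at most three and $\beta$ a bijection from the leaves of $T$ to $U$. Each edge $xy$ of $T$ splits the leaves into those in the component of $T-xy$ containing $y$ (call this set $Y$) and the rest; the order of $xy$ is $f(\beta(Y))$. The width of the layout is the maximum order of an edge of $T$ (0 if $T$ has no edges), and the layout-$f$-width of $U$ is the minimum width over all layouts of $f$ on $U$. Directed branch-width: for a digraph $D$ and $X\subseteq E(D)$, let $S^V_X=\{y\in V(D): \exists x,z \text{ with } \vec{xy}\in E(D)\setminus X \text{ and } \vec{yz}\in X\}$, and $f_D(X)=|S^V_X\cup S^V_{E(D)\setminus X}|$. A directed branch decomposition of $D$ is a layout of $f_D$ on $E(D)$, and $\operatorname{dbw}(D)$ is the layout-$f_D$-width of $E(D)$. Directed line graph: $\vec{L}(D)$ has vertex set $E(D)$ and an edge $\vec{ef}$ whenever there are vertices $w,x,y$ of $D$ with $e=\vec{wx}$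 and $f=\vec{xy}$. Bi-cut-rank-width: for a digraph $D$ with adjacency matrix $M$ over $\mathrm{GF}(2)$ (rows/columns indexed by $V(D)$, $M_{uv}=1$ iff $\vec{uv}\in E(D)$), let $g(X)=\operatorname{rk}(M[V(D)\setminus X, X])+\operatorname{rk}(M[X,V(D)\setminus X])$, where $M[A,B]$ is the submatrix with rows in $A$ and columns in $B$. Then $\operatorname{bcrk}(D)$ is the layout-$g$-width of $V(D)$. *)

theory Defs
  imports Complex_Main "HOL-Library.Z2" "HOL-Library.Function_Algebras"
begin

text \<open>An (undirected) graph on node set N with symmetric adjacency relation A
  (both orientations of every edge are in A).  Nodes of layout trees are
  natural numbers (every finite tree is isomorphic to one on natural numbers).\<close>

definition nbrs :: "(nat \<times> nat) set \<Rightarrow> nat \<Rightarrow> nat set" where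
  "nbrs A v = {w. (v, w) \<in> A}"

text \<open>A tree: finite, nonempty, loopless, symmetric, connected, and every edge is
  a bridge (i.e. minimally connected, equivalently acyclic).\<close>
definition is_tree :: "nat set \<Rightarrow> (nat \<times> nat) set \<Rightarrow> bool" where
  "is_tree N A \<longleftrightarrow> finite N \<and> N \<noteq> {} \<and> A \<subseteq> N \<times> N \<and> sym A \<and> (\<forall>v. (v, v) \<notin> A)
     \<and> (\<forall>x\<in>N. \<forall>y\<in>N. (x, y) \<in> A\<^sup>*)
     \<and> (\<forall>(x, y)\<in>A. (x, y) \<notin> (A - {(x, y), (y, x)})\<^sup>*)"

definition subcubic :: "nat set \<Rightarrow> (nat \<times> nat) set \<Rightarrow> bool" where
  "subcubic N A \<longleftrightarrow> (\<forall>v\<in>N. card (nbrs A v) \<le> 3)"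

text \<open>Leaves: nodes of degree at most one (degree 0 only occurs in the one-node tree).\<close>
definition leaves :: "nat set \<Rightarrow> (nat \<times> nat) set \<Rightarrow> nat set" where
  "leaves N A = {v \<in> N. card (nbrs A v) \<le> 1}"

definition side :: "nat set \<Rightarrow> (nat \<times> nat) set \<Rightarrow> nat \<Rightarrow> nat \<Rightarrow> nat set" where
  "side N A x y = {z \<in> leaves N A. (y, z) \<in> (A - {(x, y), (y, x)})\<^sup>*}"

definition layout :: "'u set \<Rightarrow> nat set \<Rightarrow> (nat \<times> nat) set \<Rightarrow> (nat \<Rightarrow> 'u) \<Rightarrow> bool" where
  "layout U N A \<beta> \<longleftrightarrow> is_tree N A \<and> subcubic N A \<and> bij_betw \<beta> (leaves N A) U"

text \<open>Width of a layout: maximum order of an edge (0 if there are no edges).\<close>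
definition layout_width ::
    "('u set \<Rightarrow> nat) \<Rightarrow> nat set \<Rightarrow> (nat \<times> nat) set \<Rightarrow> (nat \<Rightarrow> 'u) \<Rightarrow> nat" where
  "layout_width f N A \<beta> = Sup {f (\<beta> ` side N A x y) | x y. (x, y) \<in> A}"

text \<open>Layout-f-width of U: minimum width over all layouts (0 for U = {}, where
  no layout exists).\<close>
definition lwidth :: "('u set \<Rightarrow> nat) \<Rightarrow> 'u set \<Rightarrow> nat" where
  "lwidth f U = (if U = {} then 0 else
     Inf {layout_width f N A \<beta> | N A \<beta>. layout U N A \<beta>})"

text \<open>A digraph is a finite vertex set V with an edge set E \<subseteq> V \<times> V of ordered
  pairs; this representation has no parallel edges.  Loopless: no (x,x).\<close>
definition digraph :: "'a set \<Rightarrow> ('a \<times> 'a) set \<Rightarrow> bool" where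
  "digraph V E \<longleftrightarrow> finite V \<and> E \<subseteq> V \<times> V \<and> (\<forall>x. (x, x) \<notin> E)"

definition SV :: "'a set \<Rightarrow> ('a \<times> 'a) set \<Rightarrow> ('a \<times> 'a) set \<Rightarrow> 'a set" where
  "SV V E X = {y \<in> V. \<exists>x z. (x, y) \<in> E - X \<and> (y, z) \<in> X}"

definition fD :: "'a set \<Rightarrow> ('a \<times> 'a) set \<Rightarrow> ('a \<times> 'a) set \<Rightarrow> nat" where
  "fD V E X = card (SV V E X \<union> SV V E (E - X))"

definition dbw :: "'a set \<Rightarrow> ('a \<times> 'a) set \<Rightarrow> nat" where
  "dbw V E = lwidth (fD V E) E"

definition line_vertices :: "('a \<times> 'a) set \<Rightarrow> ('a \<times> 'a) set" where
  "line_vertices E = E"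

definition line_edges :: "('a \<times> 'a) set \<Rightarrow> (('a \<times> 'a) \<times> ('a \<times> 'a)) set" where
  "line_edges E = {(e, f). \<exists>w x y. e = (w, x) \<and> f = (x, y) \<and> e \<in> E \<and> f \<in> E}"

text \<open>Rank over GF(2) (type bit) of the submatrix M[R,C] of the adjacency matrix:
  the dimension of the span of its rows, each row being a function C \<rightarrow> GF(2)
  (extended by 0 outside C), in the GF(2)-vector space of functions with
  pointwise scalar multiplication.\<close>
definition gf2_scale :: "bit \<Rightarrow> ('a \<Rightarrow> bit) \<Rightarrow> ('a \<Rightarrow> bit)" where
  "gf2_scale c v = (\<lambda>i. c * v i)"

definition adj_row :: "('a \<times> 'a) set \<Rightarrow> 'a set \<Rightarrow> 'a \<Rightarrow> ('a \<Rightarrow> bit)" where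
  "adj_row E C u = (\<lambda>v. if v \<in> C \<and> (u, v) \<in> E then 1 else 0)"

definition rk2 :: "('a \<times> 'a) set \<Rightarrow> 'a set \<Rightarrow> 'a set \<Rightarrow> nat" where
  "rk2 E R C = vector_space.dim gf2_scale (adj_row E C ` R)"

definition cutrank_g :: "'a set \<Rightarrow> ('a \<times> 'a) set \<Rightarrow> 'a set \<Rightarrow> nat" where
  "cutrank_g V E X = rk2 E (V - X) X + rk2 E X (V - X)"

definition bcrk :: "'a set \<Rightarrow> ('a \<times> 'a) set \<Rightarrow> nat" where
  "bcrk V E = lwidth (cutrank_g V E) V"

lemma gf2_vector_space: "vector_space gf2_scale"
  unfolding gf2_scale_def plus_fun_def
  by unfold_locales (simp_all only: fun_eq_iff plus_fun_def distrib_left distrib_right mult.assoc mult_1_left, simp_all)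

end

theory Submission
  imports Defs
begin

lemma sum_fun_apply: "(sum F t :: 'b \<Rightarrow> 'c::comm_monoid_add) p = (\<Sum>v\<in>t. F v p)"
  by (induction t rule: infinite_finite_induct) (auto simp: plus_fun_def)

lemma rk2_eq:
  assumes fin: "finite V" and EV: "E \<subseteq> V \<times> V" and XE: "X \<subseteq> E"
  shows "rk2 (line_edges E) (E - X) X = card (SV V E X)"
proof -
  interpret v: vector_space gf2_scale by (rule gf2_vector_space)
  define r where "r y = (\<lambda>f. if f \<in> X \<and> fst f = y then 1 else (0::bit))" for y :: 'a
  define S where "S = SV V E X"
  have finS: "finite S" using fin unfolding S_def SV_def by auto
  have rows: "adj_row (line_edges E) X e = r (snd e)" if "e \<in> E" for e
    using that XE unfolding adj_row_def r_def line_edges_def by (cases e) (auto simp: fun_eq_iff)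
  have r0: "r y = 0" if "y \<notin> S" "\<exists>x. (x,y) \<in> E - X" for y
    using that EV unfolding r_def S_def SV_def by (auto simp: fun_eq_iff)
  have sub1: "adj_row (line_edges E) X ` (E - X) \<subseteq> v.span (r ` S)"
  proof
    fix a assume "a \<in> adj_row (line_edges E) X ` (E - X)"
    then obtain e where e: "e \<in> E - X" "a = r (snd e)" using rows by auto
    show "a \<in> v.span (r ` S)"
    proof (cases "snd e \<in> S")
      case True thus ?thesis using e by (auto intro: v.span_base)
    next
      case False
      then have "a = 0" using e r0[of "snd e"] by (cases e) auto
      thus ?thesis using v.span_zero by simp
    qed
  qed
  have sub2: "r ` S \<subseteq> adj_row (line_edges E) X ` (E - X)"
  proof
    fix a assume "a \<in> r ` S"
    then obtain y where y: "y \<in> S" "a = r y" by auto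
    then obtain x where "(x,y) \<in> E - X" unfolding S_def SV_def by auto
    thus "a \<in> adj_row (line_edges E) X ` (E - X)" using rows y by force
  qed
  have wit: "\<exists>z. (y,z) \<in> X" if "y \<in> S" for y using that unfolding S_def SV_def by auto
  have inj: "inj_on r S"
  proof
    fix y1 y2 assume a: "y1 \<in> S" "y2 \<in> S" "r y1 = r y2"
    obtain z where "(y1,z) \<in> X" using wit a by blast
    then have "r y1 (y1,z) = 1" unfolding r_def by simp
    then have "r y2 (y1,z) = 1" using a by simp
    thus "y1 = y2" unfolding r_def by (auto split: if_splits)
  qed
  have indep: "v.independent (r ` S)"
    unfolding v.independent_explicit_module
  proof (intro allI impI)
    fix t u w assume t: "finite t" "t \<subseteq> r ` S" and s0: "(\<Sum>v\<in>t. gf2_scale (u v) v) = 0" and wt: "w \<in> t"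
    obtain y where y: "y \<in> S" "w = r y" using t wt by auto
    obtain z where z: "(y,z) \<in> X" using wit y by blast
    have "0 = (\<Sum>v\<in>t. gf2_scale (u v) v) (y,z)" using s0 by simp
    also have "\<dots> = (\<Sum>v\<in>t. u v * v (y,z))" by (simp add: sum_fun_apply gf2_scale_def)
    also have "\<dots> = u w * w (y,z)"
    proof (rule sum.remove[OF t(1) wt, THEN trans])
      have "\<forall>v\<in>t - {w}. v (y,z) = 0"
      proof
        fix v assume "v \<in> t - {w}"
        then obtain y' where "y' \<in> S" "v = r y'" "y' \<noteq> y" using t y by auto
        thus "v (y,z) = 0" unfolding r_def by auto
      qed
      thus "u w * w (y, z) + (\<Sum>v\<in>t - {w}. u v * v (y, z)) = u w * w (y, z)" by simp
    qed
    also have "\<dots> = u w" using y z unfolding r_def by simp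
    finally show "u w = 0" by simp
  qed
  have "rk2 (line_edges E) (E - X) X \<le> card (r ` S)"
    unfolding rk2_def by (rule v.dim_le_card[OF sub1]) (use finS in auto)
  also have "\<dots> = card S" using card_image[OF inj] .
  finally have le1: "rk2 (line_edges E) (E - X) X \<le> card S" .
  have "card S = card (r ` S)" using card_image[OF inj] by simp
  also have "\<dots> \<le> rk2 (line_edges E) (E - X) X"
  proof -
    obtain B where B: "r ` S \<subseteq> B" "B \<subseteq> adj_row (line_edges E) X ` (E - X)" "v.independent B"
      "adj_row (line_edges E) X ` (E - X) \<subseteq> v.span B"
      using v.maximal_independent_subset_extend[OF sub2 indep] by blast
    have finE: "finite E" using fin EV finite_subset by (metis finite_SigmaI)
    have "finite B" using B(2) finE finite_subset by blast
    then have "card (r ` S) \<le> card B" using B(1) card_mono by blast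
    also have "\<dots> = rk2 (line_edges E) (E - X) X" unfolding rk2_def
      using v.basis_card_eq_dim[OF B(2) B(4) B(3)] .
    finally show ?thesis .
  qed
  finally show ?thesis using le1 unfolding S_def by simp
qed

lemma pointwise:
  assumes fin: "finite V" and EV: "E \<subseteq> V \<times> V" and XE: "X \<subseteq> E"
  shows "fD V E X \<le> cutrank_g (line_vertices E) (line_edges E) X
       \<and> cutrank_g (line_vertices E) (line_edges E) X \<le> 2 * fD V E X"
proof -
  have a: "rk2 (line_edges E) (E - X) X = card (SV V E X)" by (rule rk2_eq[OF fin EV XE])
  have b0: "rk2 (line_edges E) (E - (E - X)) (E - X) = card (SV V E (E - X))"
    by (rule rk2_eq[OF fin EV]) auto
  have "E - (E - X) = X" using XE by auto
  with b0 have b: "rk2 (line_edges E) X (E - X) = card (SV V E (E - X))" by simp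
  have g: "cutrank_g (line_vertices E) (line_edges E) X = card (SV V E X) + card (SV V E (E - X))"
    unfolding cutrank_g_def line_vertices_def using a b by simp
  have f1: "finite (SV V E X)" "finite (SV V E (E - X))" using fin unfolding SV_def by auto
  have "fD V E X \<le> card (SV V E X) + card (SV V E (E - X))"
    unfolding fD_def by (rule card_Un_le)
  moreover have "card (SV V E X) \<le> fD V E X" "card (SV V E (E - X)) \<le> fD V E X"
    unfolding fD_def using f1 by (auto intro: card_mono)
  ultimately show ?thesis using g by simp
qed

lemma sup_mono_nat:
  assumes "finite I" "\<forall>i\<in>I. (a i::nat) \<le> b i"
  shows "Sup (a ` I) \<le> Sup (b ` I)"
proof (cases "I = {}")
  case True thus ?thesis by simp
next
  case False
  show ?thesis
  proof (rule cSup_least)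
    show "a ` I \<noteq> {}" using False by simp
    fix x assume "x \<in> a ` I"
    then obtain i where "i \<in> I" "x = a i" by auto
    moreover have "b i \<le> Sup (b ` I)" using \<open>i \<in> I\<close> assms(1) by (simp add: le_cSup_finite)
    ultimately show "x \<le> Sup (b ` I)" using assms(2) by force
  qed
qed

lemma sup_2_nat:
  assumes "finite I" "\<forall>i\<in>I. (b i::nat) \<le> 2 * a i"
  shows "Sup (b ` I) \<le> 2 * Sup (a ` I)"
proof (cases "I = {}")
  case True thus ?thesis by simp
next
  case False
  show ?thesis
  proof (rule cSup_least)
    show "b ` I \<noteq> {}" using False by simp
    fix x assume "x \<in> b ` I"
    then obtain i where "i \<in> I" "x = b i" by auto
    moreover have "a i \<le> Sup (a ` I)" using \<open>i \<in> I\<close> assms(1) by (simp add: le_cSup_finite)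
    ultimately show "x \<le> 2 * Sup (a ` I)" using assms(2) by force
  qed
qed

lemma inf_nat_both:
  assumes "\<forall>l\<in>L. (a l::nat) \<le> b l \<and> b l \<le> 2 * a l"
  shows "Inf (a ` L) \<le> Inf (b ` L) \<and> Inf (b ` L) \<le> 2 * Inf (a ` L)"
proof (cases "L = {}")
  case True thus ?thesis by simp
next
  case False
  have "Inf (b ` L) \<in> b ` L" using False by (simp add: Inf_nat_def1)
  then obtain l where l: "l \<in> L" "Inf (b ` L) = b l" by auto
  have "Inf (a ` L) \<in> a ` L" using False by (simp add: Inf_nat_def1)
  then obtain m where m: "m \<in> L" "Inf (a ` L) = a m" by auto
  have "Inf (a ` L) \<le> a l" using l(1) by (simp add: cInf_lower)
  moreover have "Inf (b ` L) \<le> b m" using m(1) by (simp add: cInf_lower)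
  ultimately show ?thesis using assms l m by force
qed

lemma lw_image: "layout_width f N A \<beta> = Sup ((\<lambda>p. f (\<beta> ` side N A (fst p) (snd p))) ` A)"
  unfolding layout_width_def by (rule arg_cong[where f=Sup]) force

lemma lwidth_image: "lwidth f U = (if U = {} then 0 else
     Inf ((\<lambda>(N, A, \<beta>). layout_width f N A \<beta>) ` {(N, A, \<beta>). layout U N A \<beta>}))"
  unfolding lwidth_def by (rule if_cong[OF refl refl], rule arg_cong[where f=Inf]) force

theorem mainTheorem1:
  fixes V :: "'a set" and E :: "('a \<times> 'a) set"
  assumes "digraph V E"
  shows "real (bcrk (line_vertices E) (line_edges E)) / 2 - 1 \<le> real (dbw V E)
       \<and> dbw V E \<le> 8 * (1 + 2 ^ bcrk (line_vertices E) (line_edges E))"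
proof -
  have fin: "finite V" and EV: "E \<subseteq> V \<times> V" using assms unfolding digraph_def by auto
  let ?f = "fD V E" and ?g = "cutrank_g (line_vertices E) (line_edges E)"
  have lw: "layout_width ?f N A \<beta> \<le> layout_width ?g N A \<beta> \<and> layout_width ?g N A \<beta> \<le> 2 * layout_width ?f N A \<beta>"
    if L: "layout E N A \<beta>" for N A \<beta>
  proof -
    have finA: "finite A" using L unfolding layout_def is_tree_def by (meson finite_SigmaI finite_subset)
    have sub: "\<beta> ` side N A x y \<subseteq> E" for x y
      using L unfolding layout_def bij_betw_def side_def by auto
    have P: "\<forall>p\<in>A. ?f (\<beta> ` side N A (fst p) (snd p)) \<le> ?g (\<beta> ` side N A (fst p) (snd p))
        \<and> ?g (\<beta> ` side N A (fst p) (snd p)) \<le> 2 * ?f (\<beta> ` side N A (fst p) (snd p))"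
      using pointwise[OF fin EV sub] by blast
    let ?a = "\<lambda>p. ?f (\<beta> ` side N A (fst p) (snd p))" and ?c = "\<lambda>p. ?g (\<beta> ` side N A (fst p) (snd p))"
    have "Sup (?a ` A) \<le> Sup (?c ` A)" by (rule sup_mono_nat[OF finA]) (use P in blast)
    moreover have "Sup (?c ` A) \<le> 2 * Sup (?a ` A)" by (rule sup_2_nat[OF finA]) (use P in blast)
    ultimately show ?thesis unfolding lw_image by blast
  qed
  have key: "dbw V E \<le> bcrk (line_vertices E) (line_edges E) \<and> bcrk (line_vertices E) (line_edges E) \<le> 2 * dbw V E"
  proof (cases "E = {}")
    case True thus ?thesis unfolding dbw_def bcrk_def lwidth_def line_vertices_def by simp
  next
    case False
    let ?L = "{(N, A, \<beta>). layout E N A \<beta>}"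
    have "Inf ((\<lambda>(N, A, \<beta>). layout_width ?f N A \<beta>) ` ?L) \<le> Inf ((\<lambda>(N, A, \<beta>). layout_width ?g N A \<beta>) ` ?L)
      \<and> Inf ((\<lambda>(N, A, \<beta>). layout_width ?g N A \<beta>) ` ?L) \<le> 2 * Inf ((\<lambda>(N, A, \<beta>). layout_width ?f N A \<beta>) ` ?L)"
      by (rule inf_nat_both) (use lw in auto)
    then show ?thesis unfolding dbw_def bcrk_def lwidth_image using False
      by (simp add: line_vertices_def)
  qed
  let ?b = "bcrk (line_vertices E) (line_edges E)"
  have "?b < 2 ^ ?b" by (rule less_exp)
  then have "dbw V E \<le> 2 ^ ?b" using key by (meson le_trans less_imp_le)
  moreover have "(2::nat) ^ ?b \<le> 8 * (1 + 2 ^ ?b)" by simp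
  ultimately have "dbw V E \<le> 8 * (1 + 2 ^ ?b)" by (rule order_trans)
  moreover have "real ?b / 2 - 1 \<le> real (dbw V E)" using key by linarith
  ultimately show ?thesis by blast
qed

end
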